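(* Let $H\in(1/2,1)$ and $k\ge2$. As $n\to\infty$: (i) \[\sum_{\substack{i_1,\dots,i_k\in\mathbb{N}\\ 1=i_1<i_2<\dots<i_k=n}}\ \prod_{j=2}^{k}|i_j-i_{j-1}|^{2H-2}\ \sim\ \frac{\Gamma(2H-1)^{k-1}}{\Gamma((2H-1)(k-1))}\,n^{(2H-1)(k-1)-1};\] (ii) \[\sum_{\substack{i_1,\dots,i_k\in\{1,\dots,n\}\\ i_1<i_2<\dots<i_k}}\ \prod_{j=2}^{k}|i_j-i_{j-1}|^{2H-2}\ \sim\ \frac{\Gamma(2H-1)^{k-1}}{\Gamma((2H-1)(k-1)+2)}\,n^{(2H-1)(k-1)+1}.\]
   Context: $a_n\sim b_n$ means $a_n/b_n\to1$ as $n\to\infty$. *)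

theory Defs
  imports "HOL-Analysis.Analysis"
begin

text \<open>Weight of a tuple (i_1,...,i_k), given as a list of length k (list index j-1 holds i_j):
  the product over j = 2..k of |i_j - i_{j-1}|^(2H-2).\<close>
definition tuple_weight :: "real \<Rightarrow> nat list \<Rightarrow> real" where
  "tuple_weight H xs =
     (\<Prod>j\<in>{1..<length xs}. \<bar>real (xs ! j) - real (xs ! (j - 1))\<bar> powr (2 * H - 2))"

definition pinned_tuples :: "nat \<Rightarrow> nat \<Rightarrow> nat list set" where
  "pinned_tuples k n = {xs. length xs = k \<and> sorted_wrt (<) xs \<and> xs ! 0 = 1 \<and> xs ! (k - 1) = n}"

definition free_tuples :: "nat \<Rightarrow> nat \<Rightarrow> nat list set" where
  "free_tuples k n = {xs. length xs = k \<and> sorted_wrt (<) xs \<and> set xs \<subseteq> {1..n}}"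

end

theory Submission
  imports Defs "HOL-Computational_Algebra.Formal_Power_Series" "HOL-Real_Asymp.Real_Asymp"
begin


definition asym :: "(nat \<Rightarrow> real) \<Rightarrow> real \<Rightarrow> real \<Rightarrow> bool" where
  "asym b s L \<longleftrightarrow> ((\<lambda>N. b N / real N powr s) \<longlonglongrightarrow> L)"

lemma asym_cong:
  assumes "asym b s L" "eventually (\<lambda>N. b N = c N) sequentially"
  shows "asym c s L"
proof -
  have "eventually (\<lambda>N. b N / real N powr s = c N / real N powr s) sequentially"
    using assms(2) by eventually_elim simp
  then show ?thesis using assms(1) unfolding asym_def
    using Lim_transform_eventually by fastforce
qed

lemma asym_shift:
  assumes "asym b s L"
  shows "asym (\<lambda>N. b (N - m)) s L"
proof -
  have f: "filterlim (\<lambda>N::nat. N - m) sequentially sequentially"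
    by (rule filterlim_minus_const_nat_at_top)
  have 1: "(\<lambda>N. b (N - m) / real (N - m) powr s) \<longlonglongrightarrow> L"
    using filterlim_compose[OF assms[unfolded asym_def] f] by simp
  have 2: "(\<lambda>N. (real N - real m) powr s / real N powr s) \<longlonglongrightarrow> 1"
    by real_asymp
  have "(\<lambda>N. b (N - m) / real (N - m) powr s * ((real N - real m) powr s / real N powr s)) \<longlonglongrightarrow> L * 1"
    by (intro tendsto_mult 1 2)
  moreover have "eventually (\<lambda>N. b (N - m) / real (N - m) powr s * ((real N - real m) powr s / real N powr s)
      = b (N - m) / real N powr s) sequentially"
    using eventually_gt_at_top[of m]
  proof eventually_elim
    case (elim N)
    then have e: "real (N - m) = real N - real m" and p: "real N - real m > 0" by auto
    have p2: "(real N - real m) powr s > 0" using p by simp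
    have p3: "real N powr s > 0" using elim by simp
    show ?case unfolding e using p2 p3 by simp
  qed
  ultimately show ?thesis unfolding asym_def
    using Lim_transform_eventually by fastforce
qed

lemma asym_Suc:
  assumes "asym b s L"
  shows "asym (\<lambda>N. b (N + 1)) s L"
proof -
  have 1: "(\<lambda>N. b (N + 1) / real (N + 1) powr s) \<longlonglongrightarrow> L"
    using LIMSEQ_Suc[OF assms[unfolded asym_def]] by simp
  have 2: "(\<lambda>N. (real N + 1) powr s / real N powr s) \<longlonglongrightarrow> 1"
    by real_asymp
  have "(\<lambda>N. b (N + 1) / real (N + 1) powr s * ((real N + 1) powr s / real N powr s)) \<longlonglongrightarrow> L * 1"
    by (intro tendsto_mult 1 2)
  moreover have "eventually (\<lambda>N. b (N + 1) / real (N + 1) powr s * ((real N + 1) powr s / real N powr s)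
      = b (N + 1) / real N powr s) sequentially"
    using eventually_gt_at_top[of 0]
  proof eventually_elim
    case (elim N)
    have "real N + 1 > 0" by simp
    then show ?case by (simp add: field_simps)
  qed
  ultimately show ?thesis unfolding asym_def
    using Lim_transform_eventually by fastforce
qed

lemma asym_ratio0:
  assumes "asym b s L" "asym c t M" "M \<noteq> 0" "s < t"
  shows "(\<lambda>N. b N / c N) \<longlonglongrightarrow> 0"
proof -
  have 2: "(\<lambda>N. real N powr s / real N powr t) \<longlonglongrightarrow> 0"
    using assms(4) by real_asymp
  have "(\<lambda>N. (b N / real N powr s) / (c N / real N powr t) * (real N powr s / real N powr t)) \<longlonglongrightarrow> L / M * 0"
    using assms by (intro tendsto_mult tendsto_divide 2) (auto simp: asym_def)
  moreover have "eventually (\<lambda>N. (b N / real N powr s) / (c N / real N powr t) * (real N powr s / real N powr t)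
      = b N / c N) sequentially"
    using eventually_gt_at_top[of 0]
  proof eventually_elim
    case (elim N)
    then show ?case by (simp add: field_simps)
  qed
  ultimately show ?thesis
    using Lim_transform_eventually by fastforce
qed

lemma asym_ratio1:
  assumes "asym b s L" "asym c s M" "M \<noteq> 0"
  shows "(\<lambda>N. b N / c N) \<longlonglongrightarrow> L / M"
proof -
  have "(\<lambda>N. (b N / real N powr s) / (c N / real N powr s)) \<longlonglongrightarrow> L / M"
    using assms by (intro tendsto_divide) (auto simp: asym_def)
  moreover have "eventually (\<lambda>N. (b N / real N powr s) / (c N / real N powr s)
      = b N / c N) sequentially"
    using eventually_gt_at_top[of 0]
  proof eventually_elim
    case (elim N)
    then show ?case by (simp add: field_simps)
  qed
  ultimately show ?thesis
    using Lim_transform_eventually by fastforce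
qed

lemma asym_from_ratio:
  assumes "(\<lambda>N. b N / c N) \<longlonglongrightarrow> R" "asym c s M" "eventually (\<lambda>N. c N \<noteq> 0) sequentially"
  shows "asym b s (R * M)"
proof -
  have "(\<lambda>N. (b N / c N) * (c N / real N powr s)) \<longlonglongrightarrow> R * M"
    using assms by (intro tendsto_mult) (auto simp: asym_def)
  moreover have "eventually (\<lambda>N. (b N / c N) * (c N / real N powr s) = b N / real N powr s) sequentially"
    using assms(3) by eventually_elim simp
  ultimately show ?thesis unfolding asym_def
    using Lim_transform_eventually by fastforce
qed

lemma asym_pos:
  assumes "asym b s L" "L > 0"
  shows "eventually (\<lambda>N. b N > 0) sequentially"
proof -
  have "eventually (\<lambda>N. b N / real N powr s > 0) sequentially"
    using assms unfolding asym_def by (rule order_tendstoD)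
  then show ?thesis
    using eventually_gt_at_top[of 0]
    by eventually_elim (auto simp: zero_less_divide_iff)
qed

lemma asym_scale:
  assumes "asym b s L"
  shows "asym (\<lambda>N. c * b N) s (c * L)"
  using tendsto_mult_left[OF assms[unfolded asym_def], of c] unfolding asym_def by simp

definition conv :: "(nat \<Rightarrow> real) \<Rightarrow> (nat \<Rightarrow> real) \<Rightarrow> nat \<Rightarrow> real" where
  "conv a b N = (\<Sum>m\<in>{1..<N}. a m * b (N - m))"

lemma conv_commute: "conv a b N = conv b a N"
  unfolding conv_def
  by (rule sum.reindex_bij_witness[of _ "\<lambda>m. N - m" "\<lambda>m. N - m"]) auto

lemma conv_commute_fun: "conv a b = conv b a"
  using conv_commute by blast

lemma conv_nonneg: "(\<And>m. a m \<ge> 0) \<Longrightarrow> (\<And>m. b m \<ge> 0) \<Longrightarrow> conv a b N \<ge> 0"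
  unfolding conv_def by (intro sum_nonneg mult_nonneg_nonneg) auto

lemma conv_transfer:
  fixes a a' b :: "nat \<Rightarrow> real"
  assumes lim: "(\<lambda>m. a m / a' m) \<longlonglongrightarrow> 1"
    and a'nn: "\<And>m. a' m \<ge> 0" and bnn: "\<And>m. b m \<ge> 0"
    and side: "\<And>m. m \<ge> 1 \<Longrightarrow> (\<lambda>N. b (N - m) / conv a' b N) \<longlonglongrightarrow> 0"
    and pos: "eventually (\<lambda>N. conv a' b N > 0) sequentially"
  shows "(\<lambda>N. conv a b N / conv a' b N) \<longlonglongrightarrow> 1"
proof (rule tendstoI)
  fix \<epsilon> :: real assume \<epsilon>: "\<epsilon> > 0"
  define \<delta> where "\<delta> = min (\<epsilon>/2) (1/2)"
  have \<delta>: "\<delta> > 0" "\<delta> \<le> \<epsilon>/2" "\<delta> < 1" using \<epsilon> by (auto simp: \<delta>_def)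
  have "eventually (\<lambda>m. dist (a m / a' m) 1 < \<delta>) sequentially"
    using lim \<delta>(1) by (rule tendstoD)
  then obtain M0 where M0: "\<And>m. m \<ge> M0 \<Longrightarrow> \<bar>a m / a' m - 1\<bar> < \<delta>"
    by (auto simp: eventually_sequentially dist_real_def)
  define M where "M = max M0 1"
  have bound: "\<bar>a m - a' m\<bar> \<le> \<delta> * a' m" if "m \<ge> M" for m
  proof -
    have "m \<ge> M0" using that by (simp add: M_def)
    from M0[OF this] have h: "\<bar>a m / a' m - 1\<bar> < \<delta>" .
    have "a' m \<noteq> 0" using h \<delta>(3) by auto
    then have "a' m > 0" using a'nn[of m] by simp
    then have "\<bar>a m - a' m\<bar> = a' m * \<bar>a m / a' m - 1\<bar>"
      by (simp add: field_simps abs_mult)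
    also have "\<dots> \<le> a' m * \<delta>" using h \<open>a' m > 0\<close> by (intro mult_left_mono) auto
    finally show ?thesis by (simp add: mult.commute)
  qed
  define S where "S N = (\<Sum>m\<in>{1..<M}. \<bar>a m - a' m\<bar> * (b (N - m) / conv a' b N))" for N
  have "S \<longlonglongrightarrow> (\<Sum>m\<in>{1..<M}. \<bar>a m - a' m\<bar> * 0)"
    unfolding S_def by (intro tendsto_sum tendsto_mult tendsto_const side) auto
  then have "S \<longlonglongrightarrow> 0" by simp
  then have "eventually (\<lambda>N. \<bar>S N\<bar> < \<epsilon>/2) sequentially"
    using \<epsilon> by (auto dest: tendstoD[where e="\<epsilon>/2"] simp: dist_real_def)
  then show "eventually (\<lambda>N. dist (conv a b N / conv a' b N) 1 < \<epsilon>) sequentially"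
    using pos
  proof eventually_elim
    case (elim N)
    let ?c = "conv a' b N"
    have "\<bar>conv a b N - ?c\<bar> = \<bar>\<Sum>m\<in>{1..<N}. (a m - a' m) * b (N - m)\<bar>"
      unfolding conv_def by (simp add: sum_subtractf left_diff_distrib)
    also have "\<dots> \<le> (\<Sum>m\<in>{1..<N}. \<bar>a m - a' m\<bar> * b (N - m))"
      using bnn by (intro order_trans[OF sum_abs]) (simp add: abs_mult)
    also have "\<dots> \<le> (\<Sum>m\<in>{1..<N}. (if m < M then \<bar>a m - a' m\<bar> * b (N - m) else 0)
                    + \<delta> * (a' m * b (N - m)))"
    proof (rule sum_mono)
      fix m assume "m \<in> {1..<N}"
      show "\<bar>a m - a' m\<bar> * b (N - m) \<le> (if m < M then \<bar>a m - a' m\<bar> * b (N - m) else 0) + \<delta> * (a' m * b (N - m))"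
      proof (cases "m < M")
        case True
        then show ?thesis using \<delta>(1) a'nn[of m] bnn[of "N-m"] by simp
      next
        case False
        then have "\<bar>a m - a' m\<bar> * b (N - m) \<le> (\<delta> * a' m) * b (N - m)"
          using bound[of m] bnn[of "N-m"] by (intro mult_right_mono) auto
        then show ?thesis using False by simp
      qed
    qed
    also have "\<dots> = (\<Sum>m\<in>{1..<N}. (if m < M then \<bar>a m - a' m\<bar> * b (N - m) else 0)) + \<delta> * ?c"
      unfolding conv_def by (simp add: sum.distrib sum_distrib_left)
    also have "(\<Sum>m\<in>{1..<N}. (if m < M then \<bar>a m - a' m\<bar> * b (N - m) else 0))
        \<le> (\<Sum>m\<in>{1..<M}. \<bar>a m - a' m\<bar> * b (N - m))"
    proof -
      have "(\<Sum>m\<in>{1..<N}. (if m < M then \<bar>a m - a' m\<bar> * b (N - m) else 0))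
          = (\<Sum>m\<in>{1..<N} \<inter> {m. m < M}. \<bar>a m - a' m\<bar> * b (N - m))"
        by (simp add: sum.inter_restrict)
      also have "\<dots> \<le> (\<Sum>m\<in>{1..<M}. \<bar>a m - a' m\<bar> * b (N - m))"
        using bnn by (intro sum_mono2) (auto intro: mult_nonneg_nonneg)
      finally show ?thesis .
    qed
    also have "(\<Sum>m\<in>{1..<M}. \<bar>a m - a' m\<bar> * b (N - m)) = S N * ?c"
      unfolding S_def using elim(2) by (simp add: sum_distrib_right)
    finally have "\<bar>conv a b N - ?c\<bar> \<le> S N * ?c + \<delta> * ?c" by simp
    then have "\<bar>conv a b N - ?c\<bar> / ?c \<le> S N + \<delta>"
      using elim(2) by (simp add: divide_le_eq algebra_simps)
    moreover have "\<bar>conv a b N / ?c - 1\<bar> = \<bar>conv a b N - ?c\<bar> / ?c"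
      using elim(2) by (simp add: field_simps)
    ultimately show ?case using elim(1) \<delta>(2) by (simp add: dist_real_def)
  qed
qed

definition v :: "real \<Rightarrow> nat \<Rightarrow> real" where
  "v p n = (-1) ^ n * ((- p) gchoose n)"

lemma m1sq: "((-1::real) ^ n) * (-1) ^ n = 1"
  by (simp add: power_mult_distrib[symmetric])

lemma v_eq: "v p n = pochhammer p n / fact n"
  unfolding v_def gbinomial_pochhammer using m1sq[of n] by simp

lemma v_pos: "p > 0 \<Longrightarrow> v p n > 0"
  unfolding v_eq by (simp add: pochhammer_pos)

lemma v_conv: "(\<Sum>k\<in>{0..n}. v p k * v q (n - k)) = v (p + q) n"
proof -
  have "(\<Sum>k\<in>{0..n}. v p k * v q (n - k)) = (\<Sum>k\<in>{0..n}. (-1) ^ n * (((- p) gchoose k) * ((- q) gchoose (n - k))))"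
  proof (rule sum.cong)
    fix k assume "k \<in> {0..n}"
    then have "(-1::real) ^ k * (-1) ^ (n - k) = (-1) ^ n"
      by (simp add: power_add[symmetric])
    then show "v p k * v q (n - k) = (-1) ^ n * (((- p) gchoose k) * ((- q) gchoose (n - k)))"
      unfolding v_def by (metis (no_types, lifting) mult.assoc mult.left_commute)
  qed simp
  also have "\<dots> = (-1) ^ n * ((- p + - q) gchoose n)"
    by (simp add: sum_distrib_left[symmetric] gbinomial_Vandermonde)
  also have "\<dots> = v (p + q) n" unfolding v_def by simp
  finally show ?thesis .
qed

lemma v_asym: "asym (v p) (p - 1) (1 / Gamma p)"
proof -
  have lim: "(\<lambda>n. ((- p) gchoose n) / ((-1) ^ n / exp ((- p + 1) * of_real (ln (real n))))) \<longlonglongrightarrow> inverse (Gamma (- (- p)))"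
    by (rule gbinomial_asymptotic)
  have "eventually (\<lambda>n. ((- p) gchoose n) / ((-1) ^ n / exp ((- p + 1) * of_real (ln (real n)))) = v p n / real n powr (p - 1)) sequentially"
    using eventually_gt_at_top[of 0]
  proof eventually_elim
    case (elim n)
    have e: "exp ((- p + 1) * ln (real n)) = real n powr (1 - p)"
      using elim by (simp add: powr_def)
    have e2: "real n powr (p - 1) = 1 / real n powr (1 - p)"
      by (simp add: powr_minus_divide[symmetric])
    have "((- p) gchoose n) / ((-1) ^ n / real n powr (1 - p)) = ((- p) gchoose n) * real n powr (1 - p) * (-1) ^ n"
      using m1sq[of n] by (simp add: field_simps)
    then show ?case unfolding v_def e2 using e elim by simp
  qed
  then show ?thesis using lim unfolding asym_def
    by (simp add: Lim_transform_eventually divide_inverse)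
qed

definition u :: "real \<Rightarrow> nat \<Rightarrow> real" where
  "u p m = (if m = 0 then 0 else v p (m - 1))"

lemma u_nonneg: "p > 0 \<Longrightarrow> u p m \<ge> 0"
  unfolding u_def using v_pos[of p] by (simp add: less_imp_le)

lemma u_asym: "asym (u p) (p - 1) (1 / Gamma p)"
proof -
  have "asym (\<lambda>N. v p (N - 1)) (p - 1) (1 / Gamma p)"
    by (rule asym_shift[OF v_asym])
  moreover have "eventually (\<lambda>N. v p (N - 1) = u p N) sequentially"
    using eventually_gt_at_top[of 0] by eventually_elim (simp add: u_def)
  ultimately show ?thesis by (rule asym_cong)
qed

lemma u_conv: "N \<ge> 2 \<Longrightarrow> conv (u p) (u q) N = v (p + q) (N - 2)"
proof -
  assume "N \<ge> 2"
  then obtain n where N: "N = Suc (Suc n)" by (metis add_2_eq_Suc le_Suc_ex)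
  have "conv (u p) (u q) N = (\<Sum>m\<in>{Suc 0..<Suc (Suc n)}. u p m * u q (Suc (Suc n) - m))"
    unfolding conv_def N by simp
  also have "\<dots> = (\<Sum>i\<in>{0..<Suc n}. u p (Suc i) * u q (Suc (Suc n) - Suc i))"
    by (rule sum.shift_bounds_Suc_ivl)
  also have "\<dots> = (\<Sum>i\<in>{0..n}. v p i * v q (n - i))"
    by (rule sum.cong) (auto simp: u_def Suc_diff_le)
  also have "\<dots> = v (p + q) n" by (rule v_conv)
  finally show ?thesis by (simp add: N)
qed

lemma conv_scale: "conv (\<lambda>m. c * f m) (\<lambda>m. d * g m) N = c * d * conv f g N"
  unfolding conv_def by (simp add: sum_distrib_left mult_ac)

lemma conv_asym:
  fixes a b :: "nat \<Rightarrow> real"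
  assumes p: "p > 0" and q: "q > 0" and A: "A > 0" and B: "B > 0"
    and ann: "\<And>m. a m \<ge> 0" and bnn: "\<And>m. b m \<ge> 0"
    and ha: "asym a (p - 1) A" and hb: "asym b (q - 1) B"
  shows "asym (conv a b) (p + q - 1) (A * B * Gamma p * Gamma q / Gamma (p + q))"
proof -
  define K where "K = A * B * Gamma p * Gamma q / Gamma (p + q)"
  have K: "K > 0" unfolding K_def using p q A B by simp
  define a' where "a' m = A * Gamma p * u p m" for m
  define b' where "b' m = B * Gamma q * u q m" for m
  have a'nn: "\<And>m. a' m \<ge> 0" unfolding a'_def using u_nonneg[OF p] A p by simp
  have b'nn: "\<And>m. b' m \<ge> 0" unfolding b'_def using u_nonneg[OF q] B q by simp
  have ha': "asym a' (p - 1) A"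
    using asym_scale[OF u_asym[of p], of "A * Gamma p"] Gamma_real_pos[OF p] unfolding a'_def by simp
  have hb': "asym b' (q - 1) B"
    using asym_scale[OF u_asym[of q], of "B * Gamma q"] Gamma_real_pos[OF q] unfolding b'_def by simp
  have "asym (\<lambda>N. (A * Gamma p * (B * Gamma q)) * v (p + q) (N - 2)) (p + q - 1)
          ((A * Gamma p * (B * Gamma q)) * (1 / Gamma (p + q)))"
    by (rule asym_scale[OF asym_shift[OF v_asym]])
  moreover have "eventually (\<lambda>N. (A * Gamma p * (B * Gamma q)) * v (p + q) (N - 2) = conv a' b' N) sequentially"
    using eventually_ge_at_top[of 2]
    by eventually_elim (simp add: a'_def[abs_def] b'_def[abs_def] conv_scale u_conv)
  ultimately have hab': "asym (conv a' b') (p + q - 1) K"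
    unfolding K_def by (auto intro: asym_cong simp: field_simps)
  have hba': "asym (conv b' a') (p + q - 1) K"
    using hab' by (subst conv_commute_fun)
  have "(\<lambda>N. conv b a' N / conv b' a' N) \<longlonglongrightarrow> 1"
  proof (rule conv_transfer[OF _ b'nn a'nn])
    show "(\<lambda>m. b m / b' m) \<longlonglongrightarrow> 1"
      using asym_ratio1[OF hb hb'] B by simp
    show "(\<lambda>N. a' (N - m) / conv b' a' N) \<longlonglongrightarrow> 0" for m
      using asym_ratio0[OF asym_shift[OF ha'] hba'] K q by simp
    show "eventually (\<lambda>N. conv b' a' N > 0) sequentially"
      using asym_pos[OF hba' K] .
  qed
  then have r1: "(\<lambda>N. conv a' b N / conv a' b' N) \<longlonglongrightarrow> 1"
    unfolding conv_commute_fun[of b a'] conv_commute_fun[of b' a'] .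
  have "asym (conv a' b) (p + q - 1) (1 * K)"
    by (rule asym_from_ratio[OF r1 hab']) (use asym_pos[OF hab' K] in \<open>auto elim: eventually_mono\<close>)
  then have ha'b: "asym (conv a' b) (p + q - 1) K" by simp
  have r2: "(\<lambda>N. conv a b N / conv a' b N) \<longlonglongrightarrow> 1"
  proof (rule conv_transfer[OF _ a'nn bnn])
    show "(\<lambda>m. a m / a' m) \<longlonglongrightarrow> 1"
      using asym_ratio1[OF ha ha'] A by simp
    show "(\<lambda>N. b (N - m) / conv a' b N) \<longlonglongrightarrow> 0" for m
      using asym_ratio0[OF asym_shift[OF hb] ha'b] K p by simp
    show "eventually (\<lambda>N. conv a' b N > 0) sequentially"
      using asym_pos[OF ha'b K] .
  qed
  have "asym (conv a b) (p + q - 1) (1 * K)"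
    by (rule asym_from_ratio[OF r2 ha'b]) (use asym_pos[OF ha'b K] in \<open>auto elim: eventually_mono\<close>)
  then show ?thesis unfolding K_def by simp
qed



definition Sset :: "(nat \<Rightarrow> bool) \<Rightarrow> nat \<Rightarrow> nat \<Rightarrow> nat list set" where
  "Sset Q k e = {xs. length xs = Suc k \<and> sorted_wrt (<) xs \<and> Q (hd xs) \<and> 1 \<le> hd xs \<and> last xs = e}"

fun Wf :: "real \<Rightarrow> (nat \<Rightarrow> bool) \<Rightarrow> nat \<Rightarrow> nat \<Rightarrow> real" where
  "Wf H Q 0 e = (if Q e \<and> 1 \<le> e then 1 else 0)"
| "Wf H Q (Suc k) e = conv (Wf H Q k) (\<lambda>j. real j powr (2*H-2)) e"

lemma sorted_bounds:
  fixes xs :: "nat list"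
  assumes "sorted_wrt (<) xs" "x \<in> set xs"
  shows "hd xs \<le> x \<and> x \<le> last xs"
proof -
  obtain i where i: "i < length xs" "x = xs ! i" using assms(2) by (auto simp: in_set_conv_nth)
  have ne: "xs \<noteq> []" using assms(2) by auto
  have "hd xs \<le> x"
  proof (cases "i = 0")
    case True then have "x = hd xs" using i ne by (simp add: hd_conv_nth)
    then show ?thesis by simp
  next
    case False then show ?thesis using i ne sorted_wrt_nth_less[OF assms(1), of 0 i]
      by (simp add: hd_conv_nth)
  qed
  moreover have "x \<le> last xs"
  proof (cases "i = length xs - 1")
    case True then have "x = last xs" using i ne by (simp add: last_conv_nth)
    then show ?thesis by simp
  next
    case False
    then have "i < length xs - 1" using i by simp
    then have "xs ! i < xs ! (length xs - 1)" using sorted_wrt_nth_less[OF assms(1), of i "length xs - 1"] i by simp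
    then show ?thesis using i ne by (simp add: last_conv_nth)
  qed
  ultimately show ?thesis by simp
qed

lemma finite_Sset: "finite (Sset Q k e)"
proof (rule finite_subset)
  show "Sset Q k e \<subseteq> {xs. set xs \<subseteq> {..e} \<and> length xs = Suc k}"
    unfolding Sset_def using sorted_bounds by fastforce
  show "finite {xs. set xs \<subseteq> {..e} \<and> length xs = Suc k}"
    by (rule finite_lists_length_eq) simp
qed

lemma tw_snoc:
  assumes "ys \<noteq> []"
  shows "tuple_weight H (ys @ [e]) = tuple_weight H ys * \<bar>real e - real (last ys)\<bar> powr (2*H-2)"
proof -
  let ?L = "length ys"
  have L: "?L \<ge> 1" using assms by (cases ys) auto
  have "{1..<length (ys @ [e])} = insert ?L {1..<?L}" using L by (simp add: atLeastLessThanSuc)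
  then have "tuple_weight H (ys @ [e]) =
      \<bar>real ((ys @ [e]) ! ?L) - real ((ys @ [e]) ! (?L - 1))\<bar> powr (2 * H - 2) *
      (\<Prod>j\<in>{1..<?L}. \<bar>real ((ys @ [e]) ! j) - real ((ys @ [e]) ! (j - 1))\<bar> powr (2 * H - 2))"
    unfolding tuple_weight_def by simp
  also have "(\<Prod>j\<in>{1..<?L}. \<bar>real ((ys @ [e]) ! j) - real ((ys @ [e]) ! (j - 1))\<bar> powr (2 * H - 2))
      = tuple_weight H ys"
    unfolding tuple_weight_def by (rule prod.cong) (auto simp: nth_append)
  also have "(ys @ [e]) ! (?L - 1) = last ys" using L assms by (simp add: nth_append last_conv_nth)
  finally show ?thesis by (simp add: mult.commute)
qed

lemma Sset_0: "Sset Q 0 e = (if Q e \<and> 1 \<le> e then {[e]} else {})"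
proof -
  have "xs \<in> Sset Q 0 e \<longleftrightarrow> Q e \<and> 1 \<le> e \<and> xs = [e]" for xs
    unfolding Sset_def by (cases xs) auto
  then show ?thesis by auto
qed

lemma Sset_Suc: "Sset Q (Suc k) e = (\<lambda>(m, ys). ys @ [e]) ` (SIGMA m:{1..<e}. Sset Q k m)"
proof (intro equalityI subsetI)
  fix xs assume xs: "xs \<in> Sset Q (Suc k) e"
  then have len: "length xs = Suc (Suc k)" and sw: "sorted_wrt (<) xs" and Qh: "Q (hd xs)"
    and h1: "1 \<le> hd xs" and le: "last xs = e" by (auto simp: Sset_def)
  define ys where "ys = butlast xs"
  have ne: "xs \<noteq> []" using len by auto
  have lys: "length ys = Suc k" using len by (simp add: ys_def)
  then have ysne: "ys \<noteq> []" by auto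
  have xs_eq: "xs = ys @ [e]" using append_butlast_last_id[OF ne] le unfolding ys_def by simp
  have swy: "sorted_wrt (<) ys" and lt: "\<forall>x\<in>set ys. x < e"
    using sw unfolding xs_eq by (auto simp: sorted_wrt_append)
  have hy: "hd ys = hd xs" using ysne xs_eq by simp
  have "last ys \<in> set ys" using ysne by simp
  then have "last ys < e" using lt by blast
  moreover have "1 \<le> last ys" using sorted_bounds[OF swy \<open>last ys \<in> set ys\<close>] h1 hy by simp
  moreover have "ys \<in> Sset Q k (last ys)"
    using len swy Qh h1 hy unfolding Sset_def ys_def by auto
  ultimately have "(last ys, ys) \<in> (SIGMA m:{1..<e}. Sset Q k m)" by simp
  then show "xs \<in> (\<lambda>(m, ys). ys @ [e]) ` (SIGMA m:{1..<e}. Sset Q k m)"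
    by (rule rev_image_eqI) (simp add: xs_eq)
next
  fix xs assume "xs \<in> (\<lambda>(m, ys). ys @ [e]) ` (SIGMA m:{1..<e}. Sset Q k m)"
  then obtain m ys where m: "1 \<le> m" "m < e" and ys: "ys \<in> Sset Q k m" and xs: "xs = ys @ [e]" by auto
  have len: "length ys = Suc k" and sw: "sorted_wrt (<) ys" and Qh: "Q (hd ys)"
    and h1: "1 \<le> hd ys" and le: "last ys = m" using ys by (auto simp: Sset_def)
  have ne: "ys \<noteq> []" using len by auto
  have "\<forall>x\<in>set ys. x < e" using sorted_bounds[OF sw] le m by fastforce
  then have "sorted_wrt (<) (ys @ [e])" using sw by (simp add: sorted_wrt_append)
  moreover have "hd (ys @ [e]) = hd ys" using ne by simp
  ultimately show "xs \<in> Sset Q (Suc k) e"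
    unfolding xs Sset_def using len Qh h1 by simp
qed

lemma sum_Sset: "(\<Sum>xs\<in>Sset Q k e. tuple_weight H xs) = Wf H Q k e"
proof (induction k arbitrary: e)
  case 0
  show ?case by (simp add: Sset_0 tuple_weight_def)
next
  case (Suc k)
  have inj: "inj_on (\<lambda>(m, ys). ys @ [e]) (SIGMA m:{1..<e}. Sset Q k m)"
    by (auto simp: inj_on_def Sset_def)
  have "(\<Sum>xs\<in>Sset Q (Suc k) e. tuple_weight H xs)
      = (\<Sum>(m, ys)\<in>(SIGMA m:{1..<e}. Sset Q k m). tuple_weight H (ys @ [e]))"
    unfolding Sset_Suc by (subst sum.reindex[OF inj]) (simp add: case_prod_unfold)
  also have "\<dots> = (\<Sum>m\<in>{1..<e}. \<Sum>ys\<in>Sset Q k m. tuple_weight H (ys @ [e]))"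
    by (rule sum.Sigma[symmetric]) (auto simp: finite_Sset)
  also have "\<dots> = (\<Sum>m\<in>{1..<e}. \<Sum>ys\<in>Sset Q k m. tuple_weight H ys * real (e - m) powr (2*H-2))"
  proof (intro sum.cong refl)
    fix m ys assume m: "m \<in> {1..<e}" and ys: "ys \<in> Sset Q k m"
    then have ne: "ys \<noteq> []" and l: "last ys = m" by (auto simp: Sset_def)
    have "\<bar>real e - real m\<bar> = real (e - m)" using m by auto
    then show "tuple_weight H (ys @ [e]) = tuple_weight H ys * real (e - m) powr (2*H-2)"
      using tw_snoc[OF ne, of H e] l by simp
  qed
  also have "\<dots> = (\<Sum>m\<in>{1..<e}. Wf H Q k m * real (e - m) powr (2*H-2))"
    by (simp add: sum_distrib_right[symmetric] Suc.IH)
  also have "\<dots> = Wf H Q (Suc k) e" by (simp add: conv_def)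
  finally show ?case .
qed

lemma Wf_nonneg: "Wf H Q k e \<ge> 0"
  by (induction k arbitrary: e) (auto intro!: conv_nonneg)

lemma pinned_eq: "k \<ge> 1 \<Longrightarrow> pinned_tuples k n = Sset (\<lambda>x. x = 1) (k - 1) n"
proof -
  assume k: "k \<ge> 1"
  have e: "hd xs = xs ! 0 \<and> last xs = xs ! (k - 1)" if "length xs = k" for xs :: "nat list"
  proof -
    have "xs \<noteq> []" using that k by auto
    then show ?thesis using that by (simp add: hd_conv_nth last_conv_nth)
  qed
  have "xs \<in> pinned_tuples k n \<longleftrightarrow> xs \<in> Sset (\<lambda>x. x = 1) (k - 1) n" for xs
  proof (cases "length xs = k")
    case True
    have "Suc (k - 1) = k" using k by simp
    then show ?thesis using e[OF True] True unfolding pinned_tuples_def Sset_def by auto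
  next
    case False
    then show ?thesis using k unfolding pinned_tuples_def Sset_def by auto
  qed
  then show ?thesis by blast
qed

lemma free_eq: "k \<ge> 1 \<Longrightarrow> free_tuples k n = (\<Union>e\<in>{1..n}. Sset (\<lambda>_. True) (k - 1) e)"
proof (intro equalityI subsetI)
  fix xs assume k: "k \<ge> 1" and xs: "xs \<in> free_tuples k n"
  then have len: "length xs = k" and sw: "sorted_wrt (<) xs" and sub: "set xs \<subseteq> {1..n}"
    by (auto simp: free_tuples_def)
  have ne: "xs \<noteq> []" using len k by auto
  have "hd xs \<in> set xs" "last xs \<in> set xs" using ne by auto
  then have "hd xs \<in> {1..n}" "last xs \<in> {1..n}" using sub by auto
  moreover have "xs \<in> Sset (\<lambda>_. True) (k - 1) (last xs)"
    using len k sw \<open>hd xs \<in> {1..n}\<close> unfolding Sset_def by auto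
  ultimately show "xs \<in> (\<Union>e\<in>{1..n}. Sset (\<lambda>_. True) (k - 1) e)" by blast
next
  fix xs assume k: "k \<ge> 1" and "xs \<in> (\<Union>e\<in>{1..n}. Sset (\<lambda>_. True) (k - 1) e)"
  then obtain e where e: "e \<in> {1..n}" and xs: "xs \<in> Sset (\<lambda>_. True) (k - 1) e" by auto
  then have len: "length xs = k" and sw: "sorted_wrt (<) xs" and h: "1 \<le> hd xs" and l: "last xs = e"
    using k by (auto simp: Sset_def)
  have "set xs \<subseteq> {1..n}" using sorted_bounds[OF sw] h l e by fastforce
  then show "xs \<in> free_tuples k n" using len sw by (simp add: free_tuples_def)
qed

lemma sum_free: "k \<ge> 1 \<Longrightarrow> (\<Sum>xs\<in>free_tuples k n. tuple_weight H xs)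
    = conv (Wf H (\<lambda>_. True) (k - 1)) (\<lambda>_. 1) (n + 1)"
proof -
  assume k: "k \<ge> 1"
  have "(\<Sum>xs\<in>free_tuples k n. tuple_weight H xs) = (\<Sum>e\<in>{1..n}. \<Sum>xs\<in>Sset (\<lambda>_. True) (k - 1) e. tuple_weight H xs)"
    unfolding free_eq[OF k]
  proof (rule sum.UNION_disjoint)
    show "\<forall>i\<in>{1..n}. finite (Sset (\<lambda>_. True) (k - 1) i)" by (simp add: finite_Sset)
    show "\<forall>i\<in>{1..n}. \<forall>j\<in>{1..n}. i \<noteq> j \<longrightarrow> Sset (\<lambda>_. True) (k - 1) i \<inter> Sset (\<lambda>_. True) (k - 1) j = {}"
      by (auto simp: Sset_def)
  qed simp
  also have "\<dots> = (\<Sum>e\<in>{1..n}. Wf H (\<lambda>_. True) (k - 1) e)" by (simp add: sum_Sset)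
  also have "\<dots> = conv (Wf H (\<lambda>_. True) (k - 1)) (\<lambda>_. 1) (n + 1)"
    unfolding conv_def by (rule sum.cong) auto
  finally show ?thesis .
qed



lemma asym_eq: "asym b s L \<Longrightarrow> s = s' \<Longrightarrow> L = L' \<Longrightarrow> asym b s' L'"
  by simp

lemma asym_final:
  assumes "asym f s C" "C \<noteq> 0"
  shows "(\<lambda>n. f n / (C * real n powr s)) \<longlonglongrightarrow> 1"
proof -
  have "(\<lambda>n. (f n / real n powr s) / C) \<longlonglongrightarrow> C / C"
    using assms(1) unfolding asym_def by (intro tendsto_divide tendsto_const) (use assms(2) in auto)
  then show ?thesis using assms(2) by (simp add: divide_divide_eq_left mult.commute)
qed

lemma asym_const_eventually:
  assumes "eventually (\<lambda>N. b N = real N powr s) sequentially"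
  shows "asym b s 1"
proof -
  have ev: "eventually (\<lambda>N. 1 = b N / real N powr s) sequentially"
    using assms eventually_gt_at_top[of 0] by eventually_elim simp
  show ?thesis unfolding asym_def
    by (rule Lim_transform_eventually[OF tendsto_const ev])
qed

lemma w_asym: "asym (\<lambda>j. real j powr (2*H-2)) ((2*H-1) - 1) 1"
  by (rule asym_const_eventually) simp

lemma w_nonneg: "real j powr (2*H-2) \<ge> 0" by simp

lemma P1: "e \<ge> 2 \<Longrightarrow> Wf H (\<lambda>x. x = 1) (Suc 0) e = real (e - 1) powr (2*H-2)"
proof -
  assume e: "e \<ge> 2"
  have "Wf H (\<lambda>x. x = 1) (Suc 0) e = (\<Sum>m\<in>{1..<e}. if m = 1 then real (e - m) powr (2*H-2) else 0)"
    unfolding Wf.simps conv_def by (rule sum.cong) auto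
  also have "\<dots> = real (e - 1) powr (2*H-2)" using e by (simp add: sum.delta)
  finally show ?thesis .
qed

lemma asym_P:
  assumes H: "1/2 < H" "H < 1"
  shows "asym (Wf H (\<lambda>x. x = 1) (Suc j)) (real (Suc j) * (2*H-1) - 1)
            (Gamma (2*H-1) ^ Suc j / Gamma (real (Suc j) * (2*H-1)))"
proof (induction j)
  case 0
  have "asym (\<lambda>N. real (N - 1) powr (2*H-2)) ((2*H-1) - 1) 1"
    by (rule asym_shift[OF w_asym])
  moreover have "eventually (\<lambda>N. real (N - 1) powr (2*H-2) = Wf H (\<lambda>x. x = 1) (Suc 0) N) sequentially"
    using eventually_ge_at_top[of 2] by eventually_elim (rule P1[symmetric])
  ultimately have h: "asym (Wf H (\<lambda>x. x = 1) (Suc 0)) ((2*H-1) - 1) 1"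
    by (rule asym_cong)
  have G: "Gamma (2*H-1) > 0" using H by simp
  show ?case by (rule asym_eq[OF h]) (use G in simp_all)
next
  case (Suc j)
  define p where "p = real (Suc j) * (2*H-1)"
  define q where "q = 2*H-1"
  define A where "A = Gamma (2*H-1) ^ Suc j / Gamma p"
  have p: "p > 0" and q: "q > 0" using H by (auto simp: p_def q_def)
  have Gq: "Gamma q > 0" using q by simp
  have Gp: "Gamma p > 0" using p by simp
  have A: "A > 0" unfolding A_def using Gp Gq by (simp add: q_def)
  have IH: "asym (Wf H (\<lambda>x. x = 1) (Suc j)) (p - 1) A" using Suc unfolding p_def A_def .
  have hw: "asym (\<lambda>j. real j powr (2*H-2)) (q - 1) 1" using w_asym unfolding q_def .
  have c: "asym (conv (Wf H (\<lambda>x. x = 1) (Suc j)) (\<lambda>j. real j powr (2*H-2))) (p + q - 1) (A * 1 * Gamma p * Gamma q / Gamma (p + q))"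
    by (rule conv_asym[OF p q A zero_less_one Wf_nonneg w_nonneg IH hw])
  have pq: "p + q = real (Suc (Suc j)) * (2*H-1)" unfolding p_def q_def by (simp add: algebra_simps)
  have e1: "p + q - 1 = real (Suc (Suc j)) * (2*H-1) - 1" using pq by simp
  have "A * 1 * Gamma p = Gamma (2*H-1) ^ Suc j" unfolding A_def using Gp by simp
  then have e2: "A * 1 * Gamma p * Gamma q / Gamma (p + q) = Gamma (2*H-1) ^ Suc (Suc j) / Gamma (real (Suc (Suc j)) * (2*H-1))"
    unfolding pq by (simp add: q_def)
  have e3: "conv (Wf H (\<lambda>x. x = 1) (Suc j)) (\<lambda>j. real j powr (2*H-2)) = Wf H (\<lambda>x. x = 1) (Suc (Suc j))"
    by (rule ext) (simp only: Wf.simps)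
  show ?case unfolding e3[symmetric] by (rule asym_eq[OF c e1 e2])
qed

lemma asym_R:
  assumes H: "1/2 < H" "H < 1"
  shows "asym (Wf H (\<lambda>_. True) j) (real j * (2*H-1) + 1 - 1)
            (Gamma (2*H-1) ^ j / Gamma (real j * (2*H-1) + 1))"
proof (induction j)
  case 0
  have h: "asym (Wf H (\<lambda>_. True) 0) 0 1"
    by (rule asym_const_eventually) (use eventually_ge_at_top[of 1] in \<open>auto elim: eventually_mono\<close>)
  show ?case by (rule asym_eq[OF h]) simp_all
next
  case (Suc j)
  define p where "p = real j * (2*H-1) + 1"
  define q where "q = 2*H-1"
  define A where "A = Gamma (2*H-1) ^ j / Gamma p"
  have q: "q > 0" using H by (auto simp: q_def)
  have p: "p > 0" using H by (auto simp: p_def intro!: add_nonneg_pos)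
  have Gq: "Gamma q > 0" using q by simp
  have Gp: "Gamma p > 0" using p by simp
  have A: "A > 0" unfolding A_def using Gp Gq by (simp add: q_def)
  have IH: "asym (Wf H (\<lambda>_. True) j) (p - 1) A" using Suc unfolding p_def A_def .
  have hw: "asym (\<lambda>j. real j powr (2*H-2)) (q - 1) 1" using w_asym unfolding q_def .
  have c: "asym (conv (Wf H (\<lambda>_. True) j) (\<lambda>j. real j powr (2*H-2))) (p + q - 1) (A * 1 * Gamma p * Gamma q / Gamma (p + q))"
    by (rule conv_asym[OF p q A zero_less_one Wf_nonneg w_nonneg IH hw])
  have pq: "p + q = real (Suc j) * (2*H-1) + 1" unfolding p_def q_def by (simp add: algebra_simps)
  have e1: "p + q - 1 = real (Suc j) * (2*H-1) + 1 - 1" using pq by simp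
  have "A * 1 * Gamma p = Gamma (2*H-1) ^ j" unfolding A_def using Gp by simp
  then have e2: "A * 1 * Gamma p * Gamma q / Gamma (p + q) = Gamma (2*H-1) ^ Suc j / Gamma (real (Suc j) * (2*H-1) + 1)"
    unfolding pq by (simp add: q_def)
  have e3: "conv (Wf H (\<lambda>_. True) j) (\<lambda>j. real j powr (2*H-2)) = Wf H (\<lambda>_. True) (Suc j)"
    by (rule ext) (simp only: Wf.simps)
  show ?case unfolding e3[symmetric] by (rule asym_eq[OF c e1 e2])
qed

theorem lemma6p3:
  fixes H :: real and k :: nat
  assumes "1/2 < H" and "H < 1" and "k \<ge> 2"
  shows "((\<lambda>n. (\<Sum>xs\<in>pinned_tuples k n. tuple_weight H xs) /
              (Gamma (2*H - 1) ^ (k - 1) / Gamma ((2*H - 1) * real (k - 1))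
                 * real n powr ((2*H - 1) * real (k - 1) - 1))) \<longlonglongrightarrow> 1) \<and>
         ((\<lambda>n. (\<Sum>xs\<in>free_tuples k n. tuple_weight H xs) /
              (Gamma (2*H - 1) ^ (k - 1) / Gamma ((2*H - 1) * real (k - 1) + 2)
                 * real n powr ((2*H - 1) * real (k - 1) + 1))) \<longlonglongrightarrow> 1)"
proof
  have k1: "k \<ge> 1" using assms(3) by simp
  have al: "2*H - 1 > 0" using assms by simp
  have j0: "k - 1 = Suc (k - 2)" using assms(3) by simp
  obtain j where j: "k - 1 = Suc j" using j0 by blast
  have h: "asym (Wf H (\<lambda>x. x = 1) (Suc j)) (real (Suc j) * (2*H-1) - 1)
            (Gamma (2*H-1) ^ Suc j / Gamma (real (Suc j) * (2*H-1)))"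
    by (rule asym_P[OF assms(1,2)])
  have sP: "(\<lambda>n. \<Sum>xs\<in>pinned_tuples k n. tuple_weight H xs) = Wf H (\<lambda>x. x = 1) (Suc j)"
    by (rule ext) (simp only: pinned_eq[OF k1] sum_Sset j)
  have e1: "real (Suc j) * (2*H-1) - 1 = (2*H - 1) * real (k - 1) - 1" unfolding j by (simp only: mult.commute)
  have e2: "Gamma (2*H-1) ^ Suc j / Gamma (real (Suc j) * (2*H-1)) = Gamma (2*H - 1) ^ (k - 1) / Gamma ((2*H - 1) * real (k - 1))"
    unfolding j by (simp only: mult.commute)
  have hP: "asym (\<lambda>n. \<Sum>xs\<in>pinned_tuples k n. tuple_weight H xs) ((2*H - 1) * real (k - 1) - 1)
          (Gamma (2*H - 1) ^ (k - 1) / Gamma ((2*H - 1) * real (k - 1)))"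
    unfolding sP by (rule asym_eq[OF h e1 e2])
  have pos: "(2*H - 1) * real (k - 1) > 0" using al j by simp
  have cP: "Gamma (2*H - 1) ^ (k - 1) / Gamma ((2*H - 1) * real (k - 1)) \<noteq> 0"
    using Gamma_real_pos[OF al] Gamma_real_pos[OF pos] by simp
  show "(\<lambda>n. (\<Sum>xs\<in>pinned_tuples k n. tuple_weight H xs) /
              (Gamma (2*H - 1) ^ (k - 1) / Gamma ((2*H - 1) * real (k - 1))
                 * real n powr ((2*H - 1) * real (k - 1) - 1))) \<longlonglongrightarrow> 1"
    by (rule asym_final[OF hP cP])
next
  have k1: "k \<ge> 1" using assms(3) by simp
  have al: "2*H - 1 > 0" using assms by simp
  define p where "p = real (k - 1) * (2*H-1) + 1"
  define A where "A = Gamma (2*H-1) ^ (k - 1) / Gamma p"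
  have p: "p > 0" using al by (auto simp: p_def intro!: add_nonneg_pos)
  have Gp: "Gamma p > 0" using p by simp
  have A: "A > 0" unfolding A_def using Gp Gamma_real_pos[OF al] by simp
  have hR: "asym (Wf H (\<lambda>_. True) (k - 1)) (p - 1) A"
    using asym_R[OF assms(1,2), of "k - 1"] unfolding p_def A_def .
  have h1: "asym (\<lambda>_. 1) (1 - 1) 1"
    by (rule asym_const_eventually) (use eventually_gt_at_top[of 0] in \<open>auto elim: eventually_mono\<close>)
  have c: "asym (conv (Wf H (\<lambda>_. True) (k - 1)) (\<lambda>_. 1)) (p + 1 - 1) (A * 1 * Gamma p * Gamma 1 / Gamma (p + 1))"
    by (rule conv_asym[OF p zero_less_one A zero_less_one Wf_nonneg _ hR h1]) simp
  have c2: "asym (\<lambda>n. conv (Wf H (\<lambda>_. True) (k - 1)) (\<lambda>_. 1) (n + 1)) (p + 1 - 1) (A * 1 * Gamma p * Gamma 1 / Gamma (p + 1))"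
    by (rule asym_Suc[OF c])
  have e1: "p + 1 - 1 = (2*H - 1) * real (k - 1) + 1" unfolding p_def by (simp add: algebra_simps)
  have p1: "p + 1 = (2*H - 1) * real (k - 1) + 2" unfolding p_def by (simp add: algebra_simps)
  have "A * 1 * Gamma p = Gamma (2*H-1) ^ (k - 1)" unfolding A_def using Gp by simp
  then have e2: "A * 1 * Gamma p * Gamma 1 / Gamma (p + 1) = Gamma (2*H - 1) ^ (k - 1) / Gamma ((2*H - 1) * real (k - 1) + 2)"
    unfolding p1 by simp
  have sF: "(\<lambda>n. \<Sum>xs\<in>free_tuples k n. tuple_weight H xs) = (\<lambda>n. conv (Wf H (\<lambda>_. True) (k - 1)) (\<lambda>_. 1) (n + 1))"
    by (rule ext) (rule sum_free[OF k1])
  have hF: "asym (\<lambda>n. \<Sum>xs\<in>free_tuples k n. tuple_weight H xs) ((2*H - 1) * real (k - 1) + 1)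
          (Gamma (2*H - 1) ^ (k - 1) / Gamma ((2*H - 1) * real (k - 1) + 2))"
    unfolding sF by (rule asym_eq[OF c2 e1 e2])
  have pos: "(2*H - 1) * real (k - 1) + 2 > 0" using al by (simp add: add_nonneg_pos)
  have cF: "Gamma (2*H - 1) ^ (k - 1) / Gamma ((2*H - 1) * real (k - 1) + 2) \<noteq> 0"
    using Gamma_real_pos[OF al] Gamma_real_pos[OF pos] by simp
  show "(\<lambda>n. (\<Sum>xs\<in>free_tuples k n. tuple_weight H xs) /
              (Gamma (2*H - 1) ^ (k - 1) / Gamma ((2*H - 1) * real (k - 1) + 2)
                 * real n powr ((2*H - 1) * real (k - 1) + 1))) \<longlonglongrightarrow> 1"
    by (rule asym_final[OF hF cF])
qed

end
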